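(* Consider the remote-attestation Stackelberg game described in the context with a single device $\delta$ (so $\mathcal{D}=\{\delta\}$ and the only device class is $\mathcal{E}=\{\delta\}$) and a single attestation method $m$ (so $\mathcal{M}=\{m\}$). Let the defender's strategy be $p_\delta^m\in[0,1]$ and define $$\tau_\delta=\frac{1}{\mu^m}\cdot\frac{C_A^{\mathcal{E}}+C_A^\delta-G_A^\delta}{L_A^\delta-G_A^\delta}.$$ Then the attacker's best-response set is $$\mathcal{F}(\vec p)=\begin{cases}\{1\}&\text{if } p_\delta^m<\tau_\delta,\\ \{0,1\}&\text{if } p_\delta^m=\tau_\delta,\\ \{0\}&\text{otherwise.}\end{cases}$$
   Context: Remote-attestation game: there is a finite set $\mathcal{D}$ of devices partitioned into pairwise disjoint device classes $\mathcal{E}_1,\dots,\mathcal{E}_n$ (with $\bigcup_i\mathcal{E}_i=\mathcal{D}$), and a finite set $\mathcal{M}$ of attestation methods. Constants: for each method $m$, a detection probability $\mu^m$ (probability that running $m$ on a compromised device detects the compromise) and a defender cost $C_D^m$ of running $m$ on a device; for each device $\delta$, an attacker cost $C_A^\delta$ of attacking $\delta$; for each class $\mathcal{E}$, an attacker cost $C_A^{\mathcal{E}}$ of developing an exploit for $\mathcal{E}$; for each device $\delta$, defender gain $G_D^\delta$ and loss $L_D^\delta$, attacker gain $G_A^\delta$ and loss $L_A^\delta$ (losses are represented as negative values), with $G_D^\delta=-L_A^\delta$ and $L_D^\delta=-G_A^\delta$. The defender (leader) chooses $\vec p=\langle p_\delta^m\rangle\in[0,1]^{|\mathcal{D}\times\mathcal{M}|}$,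 where $p_\delta^m$ is the probability of running method $m$ on device $\delta$; the attacker (follower) chooses $\vec a=\langle a_\delta\rangle\in\{0,1\}^{|\mathcal{D}|}$ ($a_\delta=1$ means attacking $\delta$). Detection probability: $P_\delta(\vec p)=1-\prod_{m\in\mathcal{M}}(1-\mu^m p_\delta^m)$. Defender cost $C_D^T(\vec p)=\sum_{\delta}\sum_m C_D^m p_\delta^m$. Defender utility $U_D(\vec p,\vec a)=\sum_{\delta}[G_D^\delta P_\delta(\vec p)+L_D^\delta(1-P_\delta(\vec p))]a_\delta-C_D^T(\vec p)$. Attacker cost $C_A^T(\vec a)=\sum_{\mathcal{E}}\big(C_A^{\mathcal{E}}\cdot 1_{\{\exists\delta\in\mathcal{E}:a_\delta=1\}}+\sum_{\delta\in\mathcal{E}}C_A^\delta a_\delta\big)$. Attacker utility $U_A(\vec p,\vec a)=\sum_\delta[L_A^\delta P_\delta(\vec p)+G_A^\delta(1-P_\delta(\vec p))]a_\delta-C_A^T(\vec a)$. The attacker's best-response set is $\mathcal{F}(\vec p)=\operatorname{argmax}_{\vec a}U_A(\vec p,\vec a)$. *)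

theory Defs
  imports Complex_Main
begin

text \<open>Devices D, methods M, device classes Es (a partition of D).
  Defender strategy p d m (probability of running method m on device d);
  attacker strategy a d in {0,1} (real-valued 0/1, zero outside D).\<close>

definition detect_prob :: "'m set \<Rightarrow> ('m \<Rightarrow> real) \<Rightarrow> ('d \<Rightarrow> 'm \<Rightarrow> real) \<Rightarrow> 'd \<Rightarrow> real" where
  "detect_prob M mu p d = 1 - (\<Prod>m\<in>M. (1 - mu m * p d m))"

definition attacker_cost ::
  "'d set set \<Rightarrow> ('d set \<Rightarrow> real) \<Rightarrow> ('d \<Rightarrow> real) \<Rightarrow> ('d \<Rightarrow> real) \<Rightarrow> real" where
  "attacker_cost Es CAE CAd a =
     (\<Sum>E\<in>Es. CAE E * (if \<exists>d\<in>E. a d = 1 then 1 else 0) + (\<Sum>d\<in>E. CAd d * a d))"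

definition attacker_utility ::
  "'d set \<Rightarrow> 'm set \<Rightarrow> 'd set set \<Rightarrow> ('m \<Rightarrow> real) \<Rightarrow> ('d set \<Rightarrow> real) \<Rightarrow> ('d \<Rightarrow> real)
   \<Rightarrow> ('d \<Rightarrow> real) \<Rightarrow> ('d \<Rightarrow> real) \<Rightarrow> ('d \<Rightarrow> 'm \<Rightarrow> real) \<Rightarrow> ('d \<Rightarrow> real) \<Rightarrow> real" where
  "attacker_utility D M Es mu CAE CAd GA LA p a =
     (\<Sum>d\<in>D. (LA d * detect_prob M mu p d + GA d * (1 - detect_prob M mu p d)) * a d)
     - attacker_cost Es CAE CAd a"

definition attacker_strategies :: "'d set \<Rightarrow> ('d \<Rightarrow> real) set" where
  "attacker_strategies D = {a. (\<forall>d\<in>D. a d \<in> {0, 1}) \<and> (\<forall>d. d \<notin> D \<longrightarrow> a d = 0)}"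

definition best_response ::
  "'d set \<Rightarrow> 'm set \<Rightarrow> 'd set set \<Rightarrow> ('m \<Rightarrow> real) \<Rightarrow> ('d set \<Rightarrow> real) \<Rightarrow> ('d \<Rightarrow> real)
   \<Rightarrow> ('d \<Rightarrow> real) \<Rightarrow> ('d \<Rightarrow> real) \<Rightarrow> ('d \<Rightarrow> 'm \<Rightarrow> real) \<Rightarrow> ('d \<Rightarrow> real) set" where
  "best_response D M Es mu CAE CAd GA LA p =
     {a \<in> attacker_strategies D.
        \<forall>a' \<in> attacker_strategies D.
          attacker_utility D M Es mu CAE CAd GA LA p a' \<le> attacker_utility D M Es mu CAE CAd GA LA p a}"

end

theory Submission
  imports Defs
begin

lemma strat_single: "attacker_strategies {d} = {(\<lambda>_. 0), (\<lambda>_. 0)(d := 1)}"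
  unfolding attacker_strategies_def
  by (auto simp: fun_eq_iff)

theorem lemma1:
  fixes \<delta> :: 'd and m :: 'm
    and mu :: "'m \<Rightarrow> real" and CAE :: "'d set \<Rightarrow> real" and CAd GA LA :: "'d \<Rightarrow> real"
    and p :: "'d \<Rightarrow> 'm \<Rightarrow> real" and \<tau> :: real
  assumes mu_pos: "0 < mu m" and mu_le: "mu m \<le> 1"
    and LA_neg: "LA \<delta> < 0" and GA_nonneg: "0 \<le> GA \<delta>"
    and p_range: "0 \<le> p \<delta> m" "p \<delta> m \<le> 1"
    and tau_def: "\<tau> = (1 / mu m) * ((CAE {\<delta>} + CAd \<delta> - GA \<delta>) / (LA \<delta> - GA \<delta>))"
  shows "best_response {\<delta>} {m} {{\<delta>}} mu CAE CAd GA LA p =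
           (if p \<delta> m < \<tau> then {(\<lambda>_. 0)(\<delta> := 1)}
            else if p \<delta> m = \<tau> then {(\<lambda>_. 0), (\<lambda>_. 0)(\<delta> := 1)}
            else {(\<lambda>_. 0)})"
proof -
  let ?A0 = "(\<lambda>_. 0) :: 'd \<Rightarrow> real"
  let ?A1 = "((\<lambda>_. 0)(\<delta> := 1)) :: 'd \<Rightarrow> real"
  let ?U = "attacker_utility {\<delta>} {m} {{\<delta>}} mu CAE CAd GA LA p"
  define U where "U = GA \<delta> + mu m * p \<delta> m * (LA \<delta> - GA \<delta>) - CAE {\<delta>} - CAd \<delta>"
  have u0: "?U ?A0 = 0"
    by (simp add: attacker_utility_def attacker_cost_def)
  have u1: "?U ?A1 = U"
    by (simp add: attacker_utility_def attacker_cost_def detect_prob_def U_def algebra_simps)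
  have neq: "?A0 \<noteq> ?A1" by (auto simp: fun_eq_iff)
  have D: "LA \<delta> - GA \<delta> < 0" using LA_neg GA_nonneg by linarith
  define X where "X = (CAE {\<delta>} + CAd \<delta> - GA \<delta>) / (LA \<delta> - GA \<delta>)"
  have tX: "\<tau> = X / mu m" unfolding tau_def X_def by simp
  have key1: "p \<delta> m < \<tau> \<longleftrightarrow> U > 0"
  proof -
    have "p \<delta> m < \<tau> \<longleftrightarrow> mu m * p \<delta> m < (CAE {\<delta>} + CAd \<delta> - GA \<delta>) / (LA \<delta> - GA \<delta>)"
      unfolding tX X_def[symmetric] using mu_pos by (simp add: pos_less_divide_eq mult.commute)
    also have "\<dots> \<longleftrightarrow> mu m * p \<delta> m * (LA \<delta> - GA \<delta>) > CAE {\<delta>} + CAd \<delta> - GA \<delta>"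
      using D by (simp add: pos_less_divide_eq neg_less_divide_eq)
    finally show ?thesis unfolding U_def by linarith
  qed
  have key2: "p \<delta> m = \<tau> \<longleftrightarrow> U = 0"
  proof -
    have "p \<delta> m = \<tau> \<longleftrightarrow> mu m * p \<delta> m = (CAE {\<delta>} + CAd \<delta> - GA \<delta>) / (LA \<delta> - GA \<delta>)"
      unfolding tX X_def[symmetric] using mu_pos by (simp add: eq_divide_eq mult.commute)
    also have "\<dots> \<longleftrightarrow> mu m * p \<delta> m * (LA \<delta> - GA \<delta>) = CAE {\<delta>} + CAd \<delta> - GA \<delta>"
      using D by (simp add: eq_divide_eq)
    finally show ?thesis unfolding U_def by linarith
  qed
  have br: "best_response {\<delta>} {m} {{\<delta>}} mu CAE CAd GA LA p =
     {a \<in> {?A0, ?A1}. \<forall>a' \<in> {?A0, ?A1}. ?U a' \<le> ?U a}"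
    unfolding best_response_def strat_single ..
  show ?thesis
    unfolding br using key1 key2 u0 u1 neq by auto
qed

end
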